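(* Let $k$ be a field of characteristic $\neq2$, $f\in k[X]$ separable of degree $6$ with roots $\Omega\subset\bar k$, $\bar A=\bar k[X]/(f)$, and $\delta\in\bar A^*$. Let $\Lambda$ be the set of the $32$ lines $L_\varepsilon$, for $\varepsilon\in\bar A$ with $\varepsilon^2=\delta$, where $L_\varepsilon$ corresponds to the subspace $\{\varepsilon^{-1}(sX+t):s,t\in\bar k\}$ of $\bar A$; note $L_\varepsilon=L_{-\varepsilon}$. Let $L,L'\in\Lambda$ be different lines of the same parity. Then $L$ and $L'$ do not intersect, and there are exactly two lines $M,M'\in\Lambda$ of the opposite parity that intersect both $L$ and $L'$. Moreover there are $\omega,\psi\in\Omega$ such that $\{L,L',M,M'\}$ is an orbit of $\Lambda$ under the group $\Phi_{\omega\psi}$.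
   Context: For $I\subseteq\Omega$ let $\mu_I\in\bar A$ be the element with $\varphi_\theta(\mu_I)=-1$ for $\theta\in I$ and $=1$ otherwise, where $\varphi_\theta$ is evaluation at $X=\theta$. Write $\mu_\omega=\mu_{\{\omega\}}$. Multiplication by $\mu_I$ maps $L_\varepsilon$ to $L_{\varepsilon\mu_I^{-1}}$. Since $\mu_{\Omega\setminus I}=-\mu_I$, it acts on $\Lambda$ simply transitively modulo $\pm1$. Two lines $L,L'\in\Lambda$ have the same parity if for the subset $I$ with $\mu_IL=L'$ the cardinality $\#I$ is even; this is independent of replacing $I$ by $\Omega\setminus I$. Otherwise they have opposite parity. $\Phi_{\omega\psi}$ is the group of automorphisms generated by multiplication by $\mu_\omega$ and $\mu_\psi$. *)

theory Defs
  imports "HOL-Computational_Algebra.Polynomial"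
begin

text \<open>The field k is modelled as a subfield of an algebraically closed field 'a
  (playing the role of the algebraic closure).  The algebra
  A-bar = k-bar[X]/(f) is modelled by polynomials over 'a reduced modulo f.\<close>

definition subfield :: "'a::field set \<Rightarrow> bool" where
  "subfield k \<longleftrightarrow> 0 \<in> k \<and> 1 \<in> k \<and>
     (\<forall>x\<in>k. \<forall>y\<in>k. x + y \<in> k \<and> x * y \<in> k) \<and>
     (\<forall>x\<in>k. - x \<in> k \<and> inverse x \<in> k)"

definition separable_poly :: "'a::field poly \<Rightarrow> bool" where
  "separable_poly f \<longleftrightarrow> coprime f (pderiv f)"

definition roots_of :: "'a::field poly \<Rightarrow> 'a set" where
  "roots_of f = {x. poly f x = 0}"

definition Abar :: "'a::field poly \<Rightarrow> 'a poly set" where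
  "Abar f = {p. p mod f = p}"

definition Abar_unit :: "'a::field poly \<Rightarrow> 'a poly \<Rightarrow> bool" where
  "Abar_unit f d \<longleftrightarrow> (\<exists>e. (d * e) mod f = 1)"

definition line_of :: "'a::field poly \<Rightarrow> 'a poly \<Rightarrow> 'a poly set" where
  "line_of f \<epsilon> = {q \<in> Abar f. \<exists>s t. (\<epsilon> * q) mod f = [:t, s:]}"

definition Lambda :: "'a::field poly \<Rightarrow> 'a poly \<Rightarrow> 'a poly set set" where
  "Lambda f \<delta> = {line_of f \<epsilon> | \<epsilon>. \<epsilon> \<in> Abar f \<and> (\<epsilon> * \<epsilon>) mod f = \<delta> mod f}"

text \<open>Two lines (2-dim subspaces) intersect in projective space iff they share a
  nonzero vector.\<close>
definition lines_intersect :: "'a::field poly set \<Rightarrow> 'a poly set \<Rightarrow> bool" where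
  "lines_intersect L L' \<longleftrightarrow> (\<exists>q. q \<noteq> 0 \<and> q \<in> L \<and> q \<in> L')"

definition mu :: "'a::field poly \<Rightarrow> 'a set \<Rightarrow> 'a poly" where
  "mu f I = (THE p. p \<in> Abar f \<and>
      (\<forall>\<theta>\<in>roots_of f. poly p \<theta> = (if \<theta> \<in> I then -1 else 1)))"

definition mult_line :: "'a::field poly \<Rightarrow> 'a poly \<Rightarrow> 'a poly set \<Rightarrow> 'a poly set" where
  "mult_line f m L = (\<lambda>q. (m * q) mod f) ` L"

definition same_parity :: "'a::field poly \<Rightarrow> 'a poly set \<Rightarrow> 'a poly set \<Rightarrow> bool" where
  "same_parity f L L' \<longleftrightarrow>
     (\<exists>I. I \<subseteq> roots_of f \<and> mult_line f (mu f I) L = L' \<and> even (card I))"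

definition opposite_parity :: "'a::field poly \<Rightarrow> 'a poly set \<Rightarrow> 'a poly set \<Rightarrow> bool" where
  "opposite_parity f L L' \<longleftrightarrow> \<not> same_parity f L L'"

text \<open>Orbit of L under Phi_{omega psi}, the group generated by multiplication by
  mu_omega and mu_psi (commuting elements of finite order, so the group consists
  of multiplications by mu_omega^a * mu_psi^b).\<close>
definition Phi_orbit :: "'a::field poly \<Rightarrow> 'a \<Rightarrow> 'a \<Rightarrow> 'a poly set \<Rightarrow> 'a poly set set" where
  "Phi_orbit f \<omega> \<psi> L =
     {mult_line f ((mu f {\<omega>}) ^ a * (mu f {\<psi>}) ^ b) L | a b :: nat. True}"

end

theory Submission
  imports Defs
begin

lemma card_roots6:
  fixes f :: "'a::alg_closed_field poly"
  assumes deg: "degree f = 6" and sep: "separable_poly f"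
  shows "card (roots_of f) = 6"
proof -
  have fnz: "f \<noteq> 0" using deg by auto
  obtain A where A: "size A = degree f" "f = smult (lead_coeff f) (\<Prod>x\<in>#A. [:-x, 1:])"
    using alg_closed_imp_factorization[OF fnz] by blast
  have cnt: "count A x \<le> 1" for x
  proof (rule ccontr)
    assume "\<not> count A x \<le> 1"
    hence "count A x \<ge> 2" by simp
    then obtain A1 where A1: "A = add_mset x A1"
      by (metis multi_member_split count_greater_zero_iff not_numeral_le_zero not_gr0)
    have "count A1 x \<ge> 1" using \<open>count A x \<ge> 2\<close> unfolding A1 by simp
    then obtain B where "A1 = add_mset x B"
      by (metis multi_member_split count_greater_zero_iff One_nat_def Suc_le_eq)
    hence B: "A = add_mset x (add_mset x B)" using A1 by simp
    define p where "p = [:-x, 1::'a:]"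
    define g where "g = smult (lead_coeff f) (\<Prod>x\<in>#B. [:-x, 1:])"
    have fe: "f = p * (p * g)" using A(2) unfolding B p_def g_def by (simp add: mult_ac)
    have d1: "p dvd f" using fe by simp
    have d2: "p dvd pderiv f" unfolding fe pderiv_mult by simp
    have "is_unit p" using sep d1 d2 unfolding separable_poly_def
      using coprime_common_divisor by blast
    thus False unfolding p_def by (simp add: is_unit_iff_degree)
  qed
  have sub: "set_mset A \<subseteq> roots_of f"
  proof
    fix x assume "x \<in> set_mset A"
    then obtain B where B: "A = add_mset x B" by (metis multi_member_split)
    have "poly f x = lead_coeff f * (poly [:-x,1:] x * poly (\<Prod>y\<in>#B. [:-y,1:]) x)"
      by (subst A(2), simp only: B image_mset_add_mset prod_mset.add_mset poly_smult poly_mult)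
    hence "poly f x = 0" by simp
    thus "x \<in> roots_of f" by (simp add: roots_of_def)
  qed
  have "size A = card (set_mset A)"
  proof -
    have "size A = (\<Sum>x\<in>set_mset A. count A x)" by (simp add: size_multiset_overloaded_eq)
    also have "\<dots> = (\<Sum>x\<in>set_mset A. 1)" using cnt by (intro sum.cong) (auto simp: le_Suc_eq, metis count_eq_zero_iff le_Suc_eq le_zero_eq)
    finally show ?thesis by simp
  qed
  moreover have fin: "finite (roots_of f)" unfolding roots_of_def using fnz poly_roots_finite by blast
  ultimately have "card (roots_of f) \<ge> 6" using card_mono[OF fin sub] A(1) deg by simp
  moreover have "card (roots_of f) \<le> 6" using card_poly_roots_bound[OF fnz] deg by (simp add: roots_of_def)
  ultimately show ?thesis by simp
qed



lemma two_points:
  fixes s t u v a1 a2 :: "'a::field"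
  assumes "a1 \<noteq> a2" "s * a1 + t = u * a1 + v" "s * a2 + t = u * a2 + v"
  shows "s = u \<and> t = v"
proof -
  have "(s - u) * (a1 - a2) = (s*a1 + t) - (s*a2 + t) - ((u*a1+v) - (u*a2+v))" by (simp add: algebra_simps)
  also have "\<dots> = 0" using assms by simp
  finally have "(s - u) * (a1 - a2) = 0" .
  hence "s = u" using assms(1) by simp
  thus ?thesis using assms(2) by simp
qed

lemma two_elems:
  assumes "finite X" "card X \<ge> 2"
  obtains a1 a2 where "a1 \<in> X" "a2 \<in> X" "a1 \<noteq> a2"
proof -
  from assms have "X \<noteq> {}" by auto
  then obtain a1 where a1: "a1 \<in> X" by auto
  have "card (X - {a1}) \<ge> 1" using assms a1 by simp
  hence "X - {a1} \<noteq> {}" by (metis card.empty not_one_le_zero)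
  then obtain a2 where "a2 \<in> X - {a1}" by auto
  thus ?thesis using a1 that by auto
qed

locale sx =
  fixes f :: "'a::field poly"
  assumes deg6: "degree f = 6" and card6: "card (roots_of f) = 6" and two: "(2::'a) \<noteq> 0"
begin

abbreviation "Om \<equiv> roots_of f"

lemma fnz: "f \<noteq> 0" using deg6 by auto

lemma finOm: "finite Om" using card6 card_ge_0_finite by force

lemma mod_in_Abar: "p mod f \<in> Abar f" by (simp add: Abar_def)

lemma poly_mod_root: "\<theta> \<in> Om \<Longrightarrow> poly (p mod f) \<theta> = poly p \<theta>"
  by (rule poly_mod) (simp add: roots_of_def)

lemma Abar_eq:
  assumes "p \<in> Abar f" "q \<in> Abar f" "\<forall>\<theta>\<in>Om. poly p \<theta> = poly q \<theta>"
  shows "p = q"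
proof (rule ccontr)
  assume ne: "p \<noteq> q"
  define r where "r = p - q"
  have rnz: "r \<noteq> 0" using ne by (simp add: r_def)
  have "r mod f = r" using assms(1,2) by (simp add: r_def poly_mod_diff_left Abar_def)
  hence "degree r < 6" using degree_mod_less'[OF fnz, of r] rnz deg6 by simp
  moreover have "Om \<subseteq> {x. poly r x = 0}" using assms(3) by (auto simp: r_def)
  hence "card Om \<le> card {x. poly r x = 0}"
    using card_mono poly_roots_finite[OF rnz] by blast
  ultimately show False using card_poly_roots_bound[OF rnz] card6 by simp
qed

lemma mod_eq_iff: "p mod f = q mod f \<longleftrightarrow> (\<forall>\<theta>\<in>Om. poly p \<theta> = poly q \<theta>)"
proof
  assume "p mod f = q mod f"
  thus "\<forall>\<theta>\<in>Om. poly p \<theta> = poly q \<theta>" by (metis poly_mod_root)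
next
  assume "\<forall>\<theta>\<in>Om. poly p \<theta> = poly q \<theta>"
  thus "p mod f = q mod f" by (intro Abar_eq mod_in_Abar) (simp add: poly_mod_root)
qed

lemma interp: "\<exists>p\<in>Abar f. \<forall>\<theta>\<in>Om. poly p \<theta> = g \<theta>"
proof -
  define P where "P = (\<Sum>x\<in>Om. smult (g x / (\<Prod>y\<in>Om-{x}. (x - y))) (\<Prod>y\<in>Om-{x}. [:-y,1:]))"
  have "poly P z = g z" if z: "z \<in> Om" for z
  proof -
    have "poly P z = (\<Sum>x\<in>Om. g x / (\<Prod>y\<in>Om-{x}. (x - y)) * (\<Prod>y\<in>Om-{x}. (z - y)))"
      by (simp add: P_def poly_sum poly_prod)
    also have "\<dots> = g z / (\<Prod>y\<in>Om-{z}. (z - y)) * (\<Prod>y\<in>Om-{z}. (z - y))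
        + (\<Sum>x\<in>Om-{z}. g x / (\<Prod>y\<in>Om-{x}. (x - y)) * (\<Prod>y\<in>Om-{x}. (z - y)))"
      by (rule sum.remove[OF finOm z])
    also have "(\<Sum>x\<in>Om-{z}. g x / (\<Prod>y\<in>Om-{x}. (x - y)) * (\<Prod>y\<in>Om-{x}. (z - y))) = 0"
    proof (rule sum.neutral, intro ballI)
      fix x assume x: "x \<in> Om - {z}"
      have "(\<Prod>y\<in>Om-{x}. (z - y)) = 0" using x z finOm by (subst prod_zero_iff) auto
      thus "g x / (\<Prod>y\<in>Om-{x}. (x - y)) * (\<Prod>y\<in>Om-{x}. (z - y)) = 0" by simp
    qed
    also have "(\<Prod>y\<in>Om-{z}. (z - y)) \<noteq> 0" using finOm by (subst prod_zero_iff) auto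
    hence "g z / (\<Prod>y\<in>Om-{z}. (z - y)) * (\<Prod>y\<in>Om-{z}. (z - y)) = g z" by simp
    finally show ?thesis by simp
  qed
  thus ?thesis by (intro bexI[of _ "P mod f"] mod_in_Abar) (simp add: poly_mod_root)
qed

lemma mu_props: "mu f I \<in> Abar f \<and> (\<forall>\<theta>\<in>Om. poly (mu f I) \<theta> = (if \<theta> \<in> I then -1 else 1))"
proof -
  obtain p where p: "p \<in> Abar f" "\<forall>\<theta>\<in>Om. poly p \<theta> = (if \<theta> \<in> I then -1 else 1)"
    using interp[of "\<lambda>\<theta>. if \<theta> \<in> I then -1 else 1"] by blast
  have "\<exists>!p. p \<in> Abar f \<and> (\<forall>\<theta>\<in>Om. poly p \<theta> = (if \<theta> \<in> I then -1 else 1))"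
    using p by (intro ex1I[of _ p]) (auto intro: Abar_eq)
  thus ?thesis unfolding mu_def by (rule theI')
qed

lemma mu_val: "\<theta> \<in> Om \<Longrightarrow> poly (mu f I) \<theta> = (if \<theta> \<in> I then -1 else 1)"
  using mu_props by blast

lemma lin_in_Abar: "[:t, s:] \<in> Abar f"
proof -
  have "degree [:t, s:] < degree f" using deg6 by simp
  thus ?thesis by (simp add: Abar_def mod_poly_less)
qed

lemma line_of_alt:
  "line_of f e = {q \<in> Abar f. \<exists>s t. \<forall>\<theta>\<in>Om. poly e \<theta> * poly q \<theta> = s * \<theta> + t}"
proof -
  have "(e * q) mod f = [:t, s:] \<longleftrightarrow> (\<forall>\<theta>\<in>Om. poly e \<theta> * poly q \<theta> = s * \<theta> + t)" for q s t
  proof -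
    have "(e * q) mod f = [:t, s:] \<longleftrightarrow> (e * q) mod f = [:t, s:] mod f"
      using lin_in_Abar by (simp add: Abar_def)
    also have "\<dots> \<longleftrightarrow> (\<forall>\<theta>\<in>Om. poly e \<theta> * poly q \<theta> = s * \<theta> + t)"
      by (simp add: mod_eq_iff algebra_simps)
    finally show ?thesis .
  qed
  thus ?thesis unfolding line_of_def by auto
qed

lemma line_cong:
  assumes "c \<noteq> 0" "\<forall>\<theta>\<in>Om. poly e2 \<theta> = c * poly e1 \<theta>"
  shows "line_of f e2 = line_of f e1"
proof -
  have "(\<exists>s t. \<forall>\<theta>\<in>Om. poly e2 \<theta> * poly q \<theta> = s * \<theta> + t) \<longleftrightarrow>
        (\<exists>s t. \<forall>\<theta>\<in>Om. poly e1 \<theta> * poly q \<theta> = s * \<theta> + t)" for q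
  proof
    assume "\<exists>s t. \<forall>\<theta>\<in>Om. poly e2 \<theta> * poly q \<theta> = s * \<theta> + t"
    then obtain s t where st: "\<forall>\<theta>\<in>Om. poly e2 \<theta> * poly q \<theta> = s * \<theta> + t" by blast
    have "\<forall>\<theta>\<in>Om. poly e1 \<theta> * poly q \<theta> = (s / c) * \<theta> + t / c"
      using st assms by (auto simp: field_simps)
    thus "\<exists>s t. \<forall>\<theta>\<in>Om. poly e1 \<theta> * poly q \<theta> = s * \<theta> + t" by blast
  next
    assume "\<exists>s t. \<forall>\<theta>\<in>Om. poly e1 \<theta> * poly q \<theta> = s * \<theta> + t"
    then obtain s t where st: "\<forall>\<theta>\<in>Om. poly e1 \<theta> * poly q \<theta> = s * \<theta> + t" by blast
    have "\<forall>\<theta>\<in>Om. poly e2 \<theta> * poly q \<theta> = (c * s) * \<theta> + c * t"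
      using st assms by (auto simp: field_simps)
    thus "\<exists>s t. \<forall>\<theta>\<in>Om. poly e2 \<theta> * poly q \<theta> = s * \<theta> + t" by blast
  qed
  thus ?thesis unfolding line_of_alt by blast
qed

lemma mult_line_cong:
  assumes "\<forall>\<theta>\<in>Om. poly m1 \<theta> = poly m2 \<theta>"
  shows "mult_line f m1 L = mult_line f m2 L"
proof -
  have "(m1 * q) mod f = (m2 * q) mod f" for q using assms by (simp add: mod_eq_iff)
  thus ?thesis unfolding mult_line_def by simp
qed

lemma mult_line_sign:
  assumes "\<forall>\<theta>\<in>Om. poly m \<theta> * poly m \<theta> = 1"
  shows "mult_line f m (line_of f e) = line_of f (m * e)"
proof
  show "mult_line f m (line_of f e) \<subseteq> line_of f (m * e)"
  proof
    fix r assume "r \<in> mult_line f m (line_of f e)"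
    then obtain q where q: "q \<in> line_of f e" "r = (m * q) mod f" unfolding mult_line_def by auto
    then obtain s t where st: "\<forall>\<theta>\<in>Om. poly e \<theta> * poly q \<theta> = s * \<theta> + t" unfolding line_of_alt by auto
    have "\<forall>\<theta>\<in>Om. poly (m * e) \<theta> * poly r \<theta> = s * \<theta> + t"
    proof
      fix \<theta> assume th: "\<theta> \<in> Om"
      have "poly (m * e) \<theta> * poly r \<theta> = (poly m \<theta> * poly m \<theta>) * (poly e \<theta> * poly q \<theta>)"
        using th by (simp add: q(2) poly_mod_root mult_ac)
      thus "poly (m * e) \<theta> * poly r \<theta> = s * \<theta> + t" using th st assms by simp
    qed
    thus "r \<in> line_of f (m * e)" unfolding line_of_alt using q(2) mod_in_Abar by blast
  qed
next
  show "line_of f (m * e) \<subseteq> mult_line f m (line_of f e)"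
  proof
    fix r assume r: "r \<in> line_of f (m * e)"
    then obtain s t where st: "\<forall>\<theta>\<in>Om. poly (m * e) \<theta> * poly r \<theta> = s * \<theta> + t" unfolding line_of_alt by auto
    define q where "q = (m * r) mod f"
    have "\<forall>\<theta>\<in>Om. poly e \<theta> * poly q \<theta> = s * \<theta> + t"
      using st by (simp add: q_def poly_mod_root mult_ac)
    hence qL: "q \<in> line_of f e" unfolding line_of_alt using mod_in_Abar q_def by blast
    have "(m * q) mod f = r"
    proof (rule Abar_eq[OF mod_in_Abar])
      show "r \<in> Abar f" using r unfolding line_of_def by auto
      show "\<forall>\<theta>\<in>Om. poly ((m * q) mod f) \<theta> = poly r \<theta>"
      proof
        fix \<theta> assume th: "\<theta> \<in> Om"
        have "poly ((m * q) mod f) \<theta> = (poly m \<theta> * poly m \<theta>) * poly r \<theta>"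
          using th by (simp add: q_def poly_mod_root mult_ac)
        thus "poly ((m * q) mod f) \<theta> = poly r \<theta>" using th assms by simp
      qed
    qed
    thus "r \<in> mult_line f m (line_of f e)" unfolding mult_line_def using qL by force
  qed
qed

end



context sx begin

lemma sq_mu: "\<theta> \<in> Om \<Longrightarrow> poly (mu f I) \<theta> * poly (mu f I) \<theta> = 1"
  by (simp add: mu_val)

lemma zero_Abar: "0 \<in> Abar f" by (simp add: Abar_def)

lemma core_noint:
  assumes enz: "\<forall>\<theta>\<in>Om. poly e \<theta> \<noteq> 0" and D: "D \<subseteq> Om" "card D \<ge> 2" "card (Om - D) \<ge> 2"
  shows "\<not> lines_intersect (line_of f e) (line_of f (mu f D * e))"
proof
  assume "lines_intersect (line_of f e) (line_of f (mu f D * e))"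
  then obtain q where q: "q \<noteq> 0" "q \<in> line_of f e" "q \<in> line_of f (mu f D * e)"
    unfolding lines_intersect_def by blast
  obtain s t where st: "\<forall>\<theta>\<in>Om. poly e \<theta> * poly q \<theta> = s * \<theta> + t"
    using q(2) unfolding line_of_alt by blast
  obtain s' t' where st': "\<forall>\<theta>\<in>Om. poly (mu f D * e) \<theta> * poly q \<theta> = s' * \<theta> + t'"
    using q(3) unfolding line_of_alt by blast
  have finD: "finite D" using D(1) finOm finite_subset by blast
  obtain a1 a2 where a: "a1 \<in> Om - D" "a2 \<in> Om - D" "a1 \<noteq> a2"
    using two_elems[of "Om - D"] D(3) finOm by blast
  obtain b1 b2 where b: "b1 \<in> D" "b2 \<in> D" "b1 \<noteq> b2"
    using two_elems[of D] D(2) finD by blast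
  have outside: "s * \<theta> + t = s' * \<theta> + t'" if "\<theta> \<in> Om - D" for \<theta>
  proof -
    have th: "\<theta> \<in> Om" "\<theta> \<notin> D" using that by auto
    have "poly (mu f D) \<theta> = 1" using th by (simp add: mu_val)
    hence "s' * \<theta> + t' = poly e \<theta> * poly q \<theta>" using st'[rule_format, OF th(1)] by simp
    thus ?thesis using st th by simp
  qed
  have inside: "(-s) * \<theta> + (-t) = s' * \<theta> + t'" if "\<theta> \<in> D" for \<theta>
  proof -
    have th: "\<theta> \<in> Om" using that D(1) by blast
    have "s' * \<theta> + t' = - (poly e \<theta> * poly q \<theta>)" using st'[rule_format, OF th] that th by (simp add: mu_val)
    thus ?thesis using st th by simp
  qed
  have 1: "s = s' \<and> t = t'" using two_points[OF a(3) outside[OF a(1)] outside[OF a(2)]] .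
  have 2: "-s = s' \<and> -t = t'" using two_points[OF b(3) inside[OF b(1)] inside[OF b(2)]] .
  have e1: "s' = s" "t' = t" using 1 by auto
  have e2: "-s = s'" "-t = t'" using 2 by auto
  have ns: "-s = s" "-t = t" using e1 e2 by (simp_all only:)
  have "2 * s = s + s" by (rule mult_2)
  also have "\<dots> = s + (-s)" using ns(1) by (simp only:)
  also have "\<dots> = 0" by (rule add.right_inverse)
  finally have s2: "2 * s = 0" .
  have "2 * t = t + t" by (rule mult_2)
  also have "\<dots> = t + (-t)" using ns(2) by (simp only:)
  also have "\<dots> = 0" by (rule add.right_inverse)
  finally have t2: "2 * t = 0" .
  have s0: "s = 0" using s2 two by simp
  have t0: "t = 0" using t2 two by simp
  have "q = 0"
  proof (rule Abar_eq)
    show "q \<in> Abar f" using q(2) unfolding line_of_def by blast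
    show "0 \<in> Abar f" by (rule zero_Abar)
    show "\<forall>\<theta>\<in>Om. poly q \<theta> = poly 0 \<theta>"
    proof
      fix \<theta> assume th: "\<theta> \<in> Om"
      have "poly e \<theta> * poly q \<theta> = 0" using st[rule_format, OF th] s0 t0 by simp
      thus "poly q \<theta> = poly 0 \<theta>" using enz th by simp
    qed
  qed
  thus False using q(1) by simp
qed

lemma core_int:
  assumes enz: "\<forall>\<theta>\<in>Om. poly e \<theta> \<noteq> 0" and w: "w \<in> Om"
  shows "lines_intersect (line_of f e) (line_of f (mu f {w} * e))"
proof -
  obtain q where q: "q \<in> Abar f" "\<forall>\<theta>\<in>Om. poly q \<theta> = (\<theta> - w) / poly e \<theta>"
    using interp[of "\<lambda>\<theta>. (\<theta> - w) / poly e \<theta>"] by blast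
  have "\<forall>\<theta>\<in>Om. poly e \<theta> * poly q \<theta> = 1 * \<theta> + (- w)" using q enz by simp
  hence q1: "q \<in> line_of f e" unfolding line_of_alt using q(1) by blast
  have "\<forall>\<theta>\<in>Om. poly (mu f {w} * e) \<theta> * poly q \<theta> = 1 * \<theta> + (- w)" using q enz by (simp add: mu_val)
  hence q2: "q \<in> line_of f (mu f {w} * e)" unfolding line_of_alt using q(1) by blast
  obtain a1 a2 where a: "a1 \<in> Om" "a2 \<in> Om" "a1 \<noteq> a2" using two_elems[of Om] finOm card6 by auto
  obtain \<theta> where th: "\<theta> \<in> Om" "\<theta> \<noteq> w" using a by blast
  have "poly q \<theta> \<noteq> 0" using q th enz by simp
  hence "q \<noteq> 0" by auto
  thus ?thesis unfolding lines_intersect_def using q1 q2 by blast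
qed

lemma core_eq:
  assumes enz: "\<forall>\<theta>\<in>Om. poly e \<theta> \<noteq> 0" and D: "D \<subseteq> Om"
    and eq: "line_of f e = line_of f (mu f D * e)"
  shows "D = {} \<or> D = Om"
proof -
  obtain q where q: "q \<in> Abar f" "\<forall>\<theta>\<in>Om. poly q \<theta> = 1 / poly e \<theta>"
    using interp[of "\<lambda>\<theta>. 1 / poly e \<theta>"] by blast
  have "\<forall>\<theta>\<in>Om. poly e \<theta> * poly q \<theta> = 0 * \<theta> + 1" using q enz by simp
  hence "q \<in> line_of f e" unfolding line_of_alt using q(1) by blast
  hence "q \<in> line_of f (mu f D * e)" using eq by simp
  then obtain s t where st: "\<forall>\<theta>\<in>Om. poly (mu f D * e) \<theta> * poly q \<theta> = s * \<theta> + t"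
    unfolding line_of_alt by blast
  have val: "poly (mu f D) \<theta> = s * \<theta> + t" if "\<theta> \<in> Om" for \<theta>
    using st[rule_format, OF that] q that enz by simp
  have finD: "finite D" using D finOm finite_subset by blast
  have m1: "(-1::'a) \<noteq> 1"
  proof
    assume h: "(-1::'a) = 1"
    have "(2::'a) = 1 + 1" by simp
    also have "\<dots> = 1 + (-1)" using h by simp
    finally show False using two by simp
  qed
  show ?thesis
  proof (cases "card (Om - D) \<ge> 2")
    case True
    obtain a1 a2 where a: "a1 \<in> Om - D" "a2 \<in> Om - D" "a1 \<noteq> a2"
      using two_elems[of "Om - D"] True finOm by blast
    have "poly (mu f D) a1 = 1" "poly (mu f D) a2 = 1" using a by (simp_all add: mu_val)
    hence "0 * a1 + 1 = s * a1 + t" "0 * a2 + 1 = s * a2 + t" using val[of a1] val[of a2] a by simp_all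
    hence st0: "0 = s \<and> 1 = t" using two_points[OF a(3)] by blast
    have "D = {}"
    proof (rule ccontr)
      assume "D \<noteq> {}"
      then obtain d where "d \<in> D" by auto
      hence dO: "d \<in> Om" "poly (mu f D) d = -1" using D by (auto simp: mu_val)
      hence "-1 = s * d + t" using val[of d] by simp
      thus False using st0 m1 by simp
    qed
    thus ?thesis ..
  next
    case False
    have "card (Om - D) = 6 - card D" using card_Diff_subset[OF finD D] card6 by simp
    hence "card D \<ge> 2" using False by simp
    then obtain b1 b2 where b: "b1 \<in> D" "b2 \<in> D" "b1 \<noteq> b2"
      using two_elems[of D] finD by blast
    have bO: "b1 \<in> Om" "b2 \<in> Om" using b D by auto
    have "poly (mu f D) b1 = -1" "poly (mu f D) b2 = -1" using b bO by (simp_all add: mu_val)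
    hence "0 * b1 + (-1) = s * b1 + t" "0 * b2 + (-1) = s * b2 + t" using val[of b1] val[of b2] bO by simp_all
    hence st0: "0 = s \<and> -1 = t" using two_points[OF b(3)] by blast
    have "Om - D = {}"
    proof (rule ccontr)
      assume "Om - D \<noteq> {}"
      then obtain d where "d \<in> Om - D" by auto
      hence dO: "d \<in> Om" "poly (mu f D) d = 1" by (auto simp: mu_val)
      hence "1 = s * d + t" using val[of d] by simp
      thus False using st0 m1 by simp
    qed
    thus ?thesis using D by blast
  qed
qed

end



locale sx2 = sx f for f :: "'a::field poly" +
  fixes \<epsilon> \<delta> :: "'a poly"
  assumes enz: "\<forall>\<theta>\<in>roots_of f. poly \<epsilon> \<theta> \<noteq> 0"
    and epsA: "\<epsilon> \<in> Abar f" and sq: "(\<epsilon> * \<epsilon>) mod f = \<delta> mod f"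
begin

definition Lx where "Lx K = line_of f (mu f K * \<epsilon>)"

lemma enzK: "\<forall>\<theta>\<in>Om. poly (mu f K * \<epsilon>) \<theta> \<noteq> 0"
  using enz by (simp add: mu_val)

lemma Lx_shift: "Lx K' = line_of f (mu f ((K - K') \<union> (K' - K)) * (mu f K * \<epsilon>))"
  unfolding Lx_def by (rule line_cong[of 1]) (auto simp: mu_val)

lemma Lx_mult: "mult_line f (mu f J) (Lx K) = Lx ((K - J) \<union> (J - K))"
proof -
  have "mult_line f (mu f J) (Lx K) = line_of f (mu f J * (mu f K * \<epsilon>))"
    unfolding Lx_def by (rule mult_line_sign) (simp add: sq_mu)
  also have "\<dots> = Lx ((K - J) \<union> (J - K))"
    unfolding Lx_def by (rule line_cong[of 1]) (auto simp: mu_val)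
  finally show ?thesis .
qed

lemma Lx_compl: "Lx (Om - K) = Lx K"
  unfolding Lx_def by (rule line_cong[of "-1"]) (auto simp: mu_val)

lemma Lx_empty: "Lx {} = line_of f \<epsilon>"
  unfolding Lx_def by (rule line_cong[of 1]) (auto simp: mu_val)

lemma Lx_eq_iff:
  assumes "K \<subseteq> Om" "K' \<subseteq> Om"
  shows "Lx K = Lx K' \<longleftrightarrow> K' = K \<or> K' = Om - K"
proof
  assume eq: "Lx K = Lx K'"
  define D where "D = (K - K') \<union> (K' - K)"
  have DO: "D \<subseteq> Om" using assms unfolding D_def by blast
  have "Lx K = line_of f (mu f D * (mu f K * \<epsilon>))" using eq Lx_shift[of K' K] unfolding D_def by simp
  hence "line_of f (mu f K * \<epsilon>) = line_of f (mu f D * (mu f K * \<epsilon>))" unfolding Lx_def .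
  hence "D = {} \<or> D = Om" by (rule core_eq[OF enzK DO])
  thus "K' = K \<or> K' = Om - K"
  proof
    assume "D = {}" thus ?thesis unfolding D_def by blast
  next
    assume h: "D = Om"
    have "K' = Om - K"
    proof (intro set_eqI iffI)
      fix x assume "x \<in> K'"
      thus "x \<in> Om - K" using assms h unfolding D_def by blast
    next
      fix x assume x: "x \<in> Om - K"
      hence "x \<in> D" using h by simp
      thus "x \<in> K'" using x unfolding D_def by blast
    qed
    thus ?thesis ..
  qed
next
  assume "K' = K \<or> K' = Om - K"
  thus "Lx K = Lx K'" using Lx_compl by auto
qed

lemma Lx_noint:
  assumes "K \<subseteq> Om" "K' \<subseteq> Om" "D = (K - K') \<union> (K' - K)" "card D \<ge> 2" "card (Om - D) \<ge> 2"
  shows "\<not> lines_intersect (Lx K) (Lx K')"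
proof -
  have "D \<subseteq> Om" using assms by blast
  thus ?thesis unfolding Lx_shift[of K' K] using core_noint[OF enzK, of D] assms
    by (simp add: Lx_def)
qed

lemma Lx_int:
  assumes "(K - K') \<union> (K' - K) = {w}" "w \<in> Om"
  shows "lines_intersect (Lx K) (Lx K')"
  unfolding Lx_shift[of K' K] using core_int[OF enzK assms(2), of K] assms(1)
  by (simp add: Lx_def)

lemma Lambda_Lx:
  assumes "N \<in> Lambda f \<delta>"
  shows "\<exists>K\<subseteq>Om. N = Lx K"
proof -
  obtain e where e: "N = line_of f e" "e \<in> Abar f" "(e * e) mod f = \<delta> mod f"
    using assms unfolding Lambda_def by blast
  have sqv: "poly e \<theta> * poly e \<theta> = poly \<epsilon> \<theta> * poly \<epsilon> \<theta>" if "\<theta> \<in> Om" for \<theta>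
  proof -
    have "(e * e) mod f = (\<epsilon> * \<epsilon>) mod f" using e(3) sq by simp
    thus ?thesis using that unfolding mod_eq_iff by simp
  qed
  define K where "K = {\<theta>\<in>Om. poly e \<theta> = - poly \<epsilon> \<theta>}"
  have "\<forall>\<theta>\<in>Om. poly e \<theta> = 1 * poly (mu f K * \<epsilon>) \<theta>"
  proof
    fix \<theta> assume th: "\<theta> \<in> Om"
    have "poly e \<theta> = poly \<epsilon> \<theta> \<or> poly e \<theta> = - poly \<epsilon> \<theta>"
      using sqv[OF th] by (simp add: square_eq_iff)
    then show "poly e \<theta> = 1 * poly (mu f K * \<epsilon>) \<theta>"
    proof (cases "\<theta> \<in> K")
      case True
      hence "poly e \<theta> = - poly \<epsilon> \<theta>" unfolding K_def by blast
      moreover have "poly (mu f K) \<theta> = -1" using True th by (simp add: mu_val)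
      ultimately show ?thesis by simp
    next
      case False
      hence "poly e \<theta> = poly \<epsilon> \<theta>" using th \<open>poly e \<theta> = poly \<epsilon> \<theta> \<or> poly e \<theta> = - poly \<epsilon> \<theta>\<close> unfolding K_def by blast
      moreover have "poly (mu f K) \<theta> = 1" using False th by (simp add: mu_val)
      ultimately show ?thesis by simp
    qed
  qed
  hence "N = Lx K" unfolding Lx_def e(1) by (rule line_cong[rotated]) simp
  moreover have "K \<subseteq> Om" unfolding K_def by blast
  ultimately show ?thesis by blast
qed

lemma Lx_Lambda: "Lx K \<in> Lambda f \<delta>"
proof -
  define e where "e = (mu f K * \<epsilon>) mod f"
  have "line_of f e = Lx K" unfolding Lx_def
  proof (rule line_cong[of 1])
    show "\<forall>\<theta>\<in>Om. poly e \<theta> = 1 * poly (mu f K * \<epsilon>) \<theta>"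
    proof
      fix \<theta> assume th: "\<theta> \<in> Om"
      show "poly e \<theta> = 1 * poly (mu f K * \<epsilon>) \<theta>" unfolding e_def using poly_mod_root[OF th] by simp
    qed
  qed simp
  moreover have "e \<in> Abar f" unfolding e_def by (rule mod_in_Abar)
  moreover have "(e * e) mod f = \<delta> mod f"
  proof -
    have "(e * e) mod f = (\<epsilon> * \<epsilon>) mod f"
      unfolding mod_eq_iff
    proof
      fix \<theta> assume th: "\<theta> \<in> Om"
      have "poly (e * e) \<theta> = (poly (mu f K) \<theta> * poly (mu f K) \<theta>) * (poly \<epsilon> \<theta> * poly \<epsilon> \<theta>)"
        using th by (simp add: e_def poly_mod_root mult_ac)
      thus "poly (e * e) \<theta> = poly (\<epsilon> * \<epsilon>) \<theta>" using th by (simp add: sq_mu)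
    qed
    thus ?thesis using sq by simp
  qed
  ultimately show ?thesis unfolding Lambda_def by blast
qed

lemma sp_Lx: "same_parity f (Lx {}) N \<longleftrightarrow> (\<exists>I\<subseteq>Om. N = Lx I \<and> even (card I))"
  unfolding same_parity_def using Lx_mult[of _ "{}"] by auto

lemma odd_not_sp:
  assumes "J \<subseteq> Om" "odd (card J)"
  shows "\<not> same_parity f (Lx {}) (Lx J)"
proof
  assume "same_parity f (Lx {}) (Lx J)"
  then obtain I where I: "I \<subseteq> Om" "Lx J = Lx I" "even (card I)" unfolding sp_Lx by blast
  hence "I = J \<or> I = Om - J" using Lx_eq_iff[OF assms(1) I(1)] by simp
  moreover have "card (Om - J) = 6 - card J" using card_Diff_subset[OF finite_subset[OF assms(1) finOm] assms(1)] card6 by simp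
  moreover have "card J \<le> 6" using card_mono[OF finOm assms(1)] card6 by simp
  ultimately show False using I(3) assms(2) by (auto; presburger)
qed

lemma mu_pow_val:
  assumes "a \<noteq> b" "\<theta> \<in> Om"
  shows "poly (mu f {a} ^ i * mu f {b} ^ j) \<theta> = poly (mu f {x. (x = a \<and> odd i) \<or> (x = b \<and> odd j)}) \<theta>"
  using assms by (auto simp: mu_val poly_power minus_one_power_iff)

lemma orbit:
  assumes "a \<noteq> b"
  shows "Phi_orbit f a b (Lx {}) = {Lx {}, Lx {a}, Lx {b}, Lx {a, b}}"
proof -
  have key: "mult_line f (mu f {a} ^ i * mu f {b} ^ j) (Lx {}) = Lx {x. (x = a \<and> odd i) \<or> (x = b \<and> odd j)}" for i j
  proof -
    have "mult_line f (mu f {a} ^ i * mu f {b} ^ j) (Lx {}) = mult_line f (mu f {x. (x = a \<and> odd i) \<or> (x = b \<and> odd j)}) (Lx {})"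
      by (rule mult_line_cong) (use mu_pow_val[OF assms] in blast)
    thus ?thesis using Lx_mult[of _ "{}"] by simp
  qed
  have Kset: "{x. (x = a \<and> P) \<or> (x = b \<and> Q)} = (if P then {a} else {}) \<union> (if Q then {b} else {})" for P Q
    by auto
  have mem: "X \<in> Phi_orbit f a b (Lx {})" if "X = mult_line f (mu f {a} ^ i * mu f {b} ^ j) (Lx {})" for X i j
    unfolding Phi_orbit_def using that by blast
  show ?thesis
  proof
    show "Phi_orbit f a b (Lx {}) \<subseteq> {Lx {}, Lx {a}, Lx {b}, Lx {a, b}}"
    proof
      fix N assume "N \<in> Phi_orbit f a b (Lx {})"
      then obtain i j where "N = mult_line f (mu f {a} ^ i * mu f {b} ^ j) (Lx {})"
        unfolding Phi_orbit_def by blast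
      hence "N = Lx {x. (x = a \<and> odd i) \<or> (x = b \<and> odd j)}" using key by simp
      hence N: "N = Lx ((if odd i then {a} else {}) \<union> (if odd j then {b} else {}))" unfolding Kset .
      show "N \<in> {Lx {}, Lx {a}, Lx {b}, Lx {a, b}}"
      proof (cases "odd i"; cases "odd j")
      qed (simp_all add: N insert_commute)
    qed
  next
    have e1: "{x. (x = a \<and> odd (0::nat)) \<or> (x = b \<and> odd (0::nat))} = {}" by auto
    have 1: "Lx {} \<in> Phi_orbit f a b (Lx {})"
      by (rule mem[OF key[of 0 0, unfolded e1, symmetric]])
    have e2: "{x. (x = a \<and> odd (1::nat)) \<or> (x = b \<and> odd (0::nat))} = {a}" by auto
    have 2: "Lx {a} \<in> Phi_orbit f a b (Lx {})"
      by (rule mem[OF key[of 1 0, unfolded e2, symmetric]])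
    have e3: "{x. (x = a \<and> odd (0::nat)) \<or> (x = b \<and> odd (1::nat))} = {b}" by auto
    have 3: "Lx {b} \<in> Phi_orbit f a b (Lx {})"
      by (rule mem[OF key[of 0 1, unfolded e3, symmetric]])
    have e4: "{x. (x = a \<and> odd (1::nat)) \<or> (x = b \<and> odd (1::nat))} = {a, b}" by auto
    have 4: "Lx {a, b} \<in> Phi_orbit f a b (Lx {})"
      by (rule mem[OF key[of 1 1, unfolded e4, symmetric]])
    show "{Lx {}, Lx {a}, Lx {b}, Lx {a, b}} \<subseteq> Phi_orbit f a b (Lx {})" using 1 2 3 4 by blast
  qed
qed

end



theorem lemma2p15:
  fixes k :: "'a::alg_closed_field set" and f \<delta> :: "'a poly" and L L' :: "'a poly set"
  assumes "subfield k"
    and "(2::'a) \<noteq> 0"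
    and "\<forall>i. coeff f i \<in> k"
    and "degree f = 6"
    and "separable_poly f"
    and "\<delta> \<in> Abar f" and "Abar_unit f \<delta>"
    and "L \<in> Lambda f \<delta>" and "L' \<in> Lambda f \<delta>" and "L \<noteq> L'"
    and "same_parity f L L'"
  shows "\<not> lines_intersect L L' \<and>
    (\<exists>M M'. M \<noteq> M' \<and>
       {N \<in> Lambda f \<delta>. opposite_parity f L N \<and> lines_intersect N L \<and> lines_intersect N L'}
         = {M, M'} \<and>
       (\<exists>\<omega>\<in>roots_of f. \<exists>\<psi>\<in>roots_of f. Phi_orbit f \<omega> \<psi> L = {L, L', M, M'}))"
proof -
  have card6: "card (roots_of f) = 6" using card_roots6 assms(4,5) by blast
  interpret sx f using assms(4) card6 assms(2) by unfold_locales
  obtain \<epsilon> where eps: "L = line_of f \<epsilon>" "\<epsilon> \<in> Abar f" "(\<epsilon> * \<epsilon>) mod f = \<delta> mod f"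
    using assms(8) unfolding Lambda_def by blast
  obtain u where u: "(\<delta> * u) mod f = 1" using assms(7) unfolding Abar_unit_def by blast
  have enz: "\<forall>\<theta>\<in>Om. poly \<epsilon> \<theta> \<noteq> 0"
  proof
    fix \<theta> assume th: "\<theta> \<in> Om"
    have "poly ((\<delta> * u) mod f) \<theta> = 1" using u by simp
    hence "poly \<delta> \<theta> * poly u \<theta> = 1" using poly_mod_root[OF th] by simp
    hence d: "poly \<delta> \<theta> \<noteq> 0" by auto
    have "poly (\<epsilon> * \<epsilon>) \<theta> = poly \<delta> \<theta>" using eps(3) th unfolding mod_eq_iff by blast
    thus "poly \<epsilon> \<theta> \<noteq> 0" using d by auto
  qed
  interpret sx2 f \<epsilon> \<delta> by unfold_locales (use enz eps in auto)
  have L0: "L = Lx {}" using Lx_empty eps(1) by simp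
  obtain I0 where I0: "I0 \<subseteq> Om" "L' = Lx I0" "even (card I0)"
    using assms(11) unfolding L0 sp_Lx by blast
  have finI0: "finite I0" using I0(1) finOm finite_subset by blast
  have "I0 \<noteq> {}" using I0(2) L0 assms(10) by auto
  hence c0: "card I0 \<noteq> 0" using finI0 by simp
  have "I0 \<noteq> Om"
  proof
    assume "I0 = Om"
    hence "L' = Lx (Om - {})" using I0(2) by simp
    thus False using Lx_compl[of "{}"] L0 assms(10) by simp
  qed
  hence c6: "card I0 \<noteq> 6" using card_subset_eq[OF finOm I0(1)] card6 by auto
  have cle: "card I0 \<le> 6" using card_mono[OF finOm I0(1)] card6 by simp
  have c24: "card I0 = 2 \<or> card I0 = 4" using c0 c6 cle I0(3) by presburger
  obtain I1 where I1: "I1 \<subseteq> Om" "card I1 = 2" "L' = Lx I1"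
  proof (cases "card I0 = 2")
    case True thus ?thesis using that I0 by blast
  next
    case False
    hence "card I0 = 4" using c24 by simp
    hence "card (Om - I0) = 2" using card_Diff_subset[OF finI0 I0(1)] card6 by simp
    moreover have "L' = Lx (Om - I0)" using I0(2) Lx_compl[of I0] by simp
    ultimately show ?thesis using that[of "Om - I0"] by blast
  qed
  obtain a b where ab: "I1 = {a, b}" "a \<noteq> b" using I1(2) unfolding card_2_iff by blast
  have aO: "a \<in> Om" and bO: "b \<in> Om" using I1(1) ab(1) by auto
  have L'ab: "L' = Lx {a, b}" using I1(3) ab(1) by simp
  have cOab: "card (Om - {a, b}) = 4"
    using card_Diff_subset[of "{a,b}" Om] aO bO ab(2) card6 by simp
  have cOa: "card (Om - {a}) = 5" using card_Diff_subset[of "{a}" Om] aO card6 by simp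
  define M where "M = Lx {a}"
  define M' where "M' = Lx {b}"
  have noint: "\<not> lines_intersect L L'"
  proof -
    have "\<not> lines_intersect (Lx {}) (Lx {a, b})"
      by (rule Lx_noint[of "{}" "{a, b}" "{a, b}"]) (use aO bO ab(2) cOab in auto)
    thus ?thesis using L0 L'ab by simp
  qed
  have MM': "M \<noteq> M'"
  proof
    assume "M = M'"
    hence "{b} = {a} \<or> {b} = Om - {a}" using Lx_eq_iff[of "{a}" "{b}"] aO bO unfolding M_def M'_def by blast
    moreover have "{b} \<noteq> Om - {a}"
    proof
      assume h: "{b} = Om - {a}"
      have "card {b} = 5" using cOa unfolding h[symmetric] .
      thus False by simp
    qed
    ultimately show False using ab(2) by blast
  qed
  have goodM: "Lx {c} \<in> Lambda f \<delta> \<and> opposite_parity f L (Lx {c}) \<and> lines_intersect (Lx {c}) L \<and> lines_intersect (Lx {c}) L'"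
    if c: "c = a \<or> c = b" for c
  proof -
    have cO: "c \<in> Om" using c aO bO by blast
    have "opposite_parity f L (Lx {c})" unfolding opposite_parity_def L0
      by (rule odd_not_sp) (use cO in auto)
    moreover have "lines_intersect (Lx {c}) L" unfolding L0
      by (rule Lx_int[of _ _ c]) (use cO in auto)
    moreover have "lines_intersect (Lx {c}) L'"
    proof (cases "c = a")
      case True
      have "({c} - {a, b}) \<union> ({a, b} - {c}) = {b}" using True ab(2) by auto
      thus ?thesis unfolding L'ab using Lx_int bO by blast
    next
      case False
      hence cb: "c = b" using c by simp
      have "({c} - {a, b}) \<union> ({a, b} - {c}) = {a}" using cb ab(2) by auto
      thus ?thesis unfolding L'ab using Lx_int aO by blast
    qed
    ultimately show ?thesis using Lx_Lambda by blast
  qed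
  have setEq: "{N \<in> Lambda f \<delta>. opposite_parity f L N \<and> lines_intersect N L \<and> lines_intersect N L'} = {M, M'}"
  proof
    show "{M, M'} \<subseteq> {N \<in> Lambda f \<delta>. opposite_parity f L N \<and> lines_intersect N L \<and> lines_intersect N L'}"
      unfolding M_def M'_def using goodM by blast
  next
    show "{N \<in> Lambda f \<delta>. opposite_parity f L N \<and> lines_intersect N L \<and> lines_intersect N L'} \<subseteq> {M, M'}"
    proof
      fix N assume "N \<in> {N \<in> Lambda f \<delta>. opposite_parity f L N \<and> lines_intersect N L \<and> lines_intersect N L'}"
      hence N: "N \<in> Lambda f \<delta>" "opposite_parity f L N" "lines_intersect N L" "lines_intersect N L'" by auto
      obtain J where J: "J \<subseteq> Om" "N = Lx J" using Lambda_Lx[OF N(1)] by blast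
      have finJ: "finite J" using J(1) finOm finite_subset by blast
      have cJ: "card J \<le> 6" using card_mono[OF finOm J(1)] card6 by simp
      have cOJ: "card (Om - J) = 6 - card J" using card_Diff_subset[OF finJ J(1)] card6 by simp
      have oJ: "odd (card J)"
      proof
        assume "even (card J)"
        hence "same_parity f L N" unfolding L0 sp_Lx using J by blast
        thus False using N(2) unfolding opposite_parity_def by blast
      qed
      have "card J \<noteq> 3"
      proof
        assume c3: "card J = 3"
        have "\<not> lines_intersect (Lx J) (Lx {})"
          by (rule Lx_noint[of J "{}" J]) (use J(1) c3 cOJ in auto)
        thus False using N(3) J(2) L0 by simp
      qed
      hence "card J = 1 \<or> card J = 5" using oJ cJ by presburger
      then obtain w where w: "w \<in> Om" "N = Lx {w}"
      proof
        assume "card J = 1"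
        then obtain w where "J = {w}" by (rule card_1_singletonE)
        thus ?thesis using that J by blast
      next
        assume "card J = 5"
        hence "card (Om - J) = 1" using cOJ by simp
        then obtain w where w: "Om - J = {w}" by (rule card_1_singletonE)
        have "N = Lx {w}" using J(2) Lx_compl[of J] w by simp
        thus ?thesis using that w by blast
      qed
      have "w = a \<or> w = b"
      proof (rule ccontr)
        assume nw: "\<not> (w = a \<or> w = b)"
        have D: "({w} - {a, b}) \<union> ({a, b} - {w}) = {w, a, b}" using nw by auto
        have c3: "card {w, a, b} = 3" using nw ab(2) by simp
        have "card (Om - {w, a, b}) = 3"
          using card_Diff_subset[of "{w, a, b}" Om] aO bO w(1) c3 card6 by simp
        hence "\<not> lines_intersect (Lx {w}) (Lx {a, b})"
          by (intro Lx_noint[OF _ _ D[symmetric]]) (use aO bO w(1) c3 in auto)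
        thus False using N(4) w(2) L'ab by simp
      qed
      thus "N \<in> {M, M'}" unfolding M_def M'_def using w(2) by blast
    qed
  qed
  have orb: "Phi_orbit f a b L = {L, L', M, M'}"
    unfolding L0 orbit[OF ab(2)] M_def M'_def L'ab by blast
  show ?thesis using noint MM' setEq orb aO bO by blast
qed


end
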